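(* Let $(\mathcal C,\otimes,\mathbb I)$ be a monoidal category with pushouts and $(H,\Delta,\varepsilon)$ a coalgebra in $\mathcal C$. The induction construction defines a functor $\mathsf{Ind}:\mathsf{Cov}^H\to\mathsf{PCom}^H$: on objects, $\mathsf{Ind}(Y,X,p)$ is the partial comodule induced from $Y$ to $X$ via $p$; on morphisms, for $(F,f):(Y,X,p)\to(Y',X',p')$ in $\mathsf{Cov}^H$ there is a unique morphism $f\bullet H:X\bullet H\to X'\bullet H$ with $(f\bullet H)\circ\rho_X=\rho_{X'}\circ f$ and $(f\bullet H)\circ\pi_X=\pi_{X'}\circ(f\otimes H)$, and $\mathsf{Ind}(F,f)=(f,f\bullet H)$ is a morphism of geometric partial comodules.
   Context: $\mathcal C$ is treated as strict monoidal; the identity of an object $X$ is also written $X$. $\mathsf{Com}^H$ is the category of right $H$-comodules $(Y,\delta)$. A partial comodule datum is $(X,X\bullet H,\pi_X,\rho_X)$ with $\rho_X:X\to X\bullet H$ and $\pi_X:X\otimes H\to X\bullet H$ an epimorphism. For such a datum let: $(X\bullet H)\bullet H$ be the pushout of $\pi_X$ and $\rho_X\otimes H$, with coprojections $\rho_X\bullet H$ and $\pi_{X\bullet H}$; $X\bullet(H\otimes H)$ the pushout of $\pi_X$ and $X\otimes\Delta$, with coprojections $X\bullet\Delta$ and $\pi_{X,\Delta}$; $X\bullet(H\bullet H)$ the pushout of $\pi_{X,\Delta}$ and $\pi_X\otimes H$, with coprojections $\pi'_X$ and $\pi'_{X,\Delta}$. A geometric partial $H$-comodule is a datum such that (GP1)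 there is $X\bullet\varepsilon:X\bullet H\to X$ with $(X\bullet\varepsilon)\circ\rho_X=\mathrm{id}_X$ and $(X\bullet\varepsilon)\circ\pi_X=X\otimes\varepsilon$; (GP2) there is an isomorphism $\theta:X\bullet(H\bullet H)\to(X\bullet H)\bullet H$ with $\theta\circ\pi'_{X,\Delta}=\pi_{X\bullet H}$ and $(\rho_X\bullet H)\circ\rho_X=\theta\circ\pi'_X\circ(X\bullet\Delta)\circ\rho_X$. Morphisms $X\to X'$ are pairs $(f,f\bullet H)$ with $\rho_{X'}\circ f=(f\bullet H)\circ\rho_X$ and $\pi_{X'}\circ(f\otimes H)=(f\bullet H)\circ\pi_X$; category $\mathsf{PCom}^H$. Induction: given $(Y,\delta)\in\mathsf{Com}^H$ and an epimorphism $p:Y\to X$ in $\mathcal C$, let $X\bullet H$ with coprojections $\rho_X:X\to X\bullet H$ and $\pi_X:X\otimes H\to X\bullet H$ be the pushout of $p$ and $(p\otimes H)\circ\delta$; it is known that $(X,X\bullet H,\pi_X,\rho_X)$ is a geometric partial comodule (the induced one). $\mathsf{Cov}^H$ has objects $(Y,X,p)$ with $Y\in\mathsf{Com}^H$, $X\in\mathcal C$, $p:Y\to X$ an epimorphism in $\mathcal C$; morphisms $(F,f):(Y,X,p)\to(Y',X',p')$ consist of a comodule morphism $F:Y\to Y'$ and a morphism $f:X\to X'$ in $\mathcal C$ with $p'\circ F=f\circ p$. *)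

theory Defs
  imports Main
begin

text \<open>A category is given by a set of objects, a set of arrows, domain, codomain,
identities and composition (cmp g f = g after f).\<close>

record ('o,'a) mcat =
  Obj :: "'o set"
  Arr :: "'a set"
  cdom :: "'a \<Rightarrow> 'o"
  ccod :: "'a \<Rightarrow> 'o"
  idt :: "'o \<Rightarrow> 'a"
  cmp :: "'a \<Rightarrow> 'a \<Rightarrow> 'a"
  tob :: "'o \<Rightarrow> 'o \<Rightarrow> 'o"
  tar :: "'a \<Rightarrow> 'a \<Rightarrow> 'a"
  unt :: "'o"

definition hom :: "('o,'a) mcat \<Rightarrow> 'o \<Rightarrow> 'o \<Rightarrow> 'a set" where
  "hom C a b = {f \<in> Arr C. cdom C f = a \<and> ccod C f = b}"

definition category :: "('o,'a) mcat \<Rightarrow> bool" where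
  "category C \<longleftrightarrow>
     (\<forall>f\<in>Arr C. cdom C f \<in> Obj C \<and> ccod C f \<in> Obj C) \<and>
     (\<forall>a\<in>Obj C. idt C a \<in> hom C a a) \<and>
     (\<forall>f\<in>Arr C. \<forall>g\<in>Arr C. ccod C f = cdom C g \<longrightarrow>
         cmp C g f \<in> hom C (cdom C f) (ccod C g)) \<and>
     (\<forall>f\<in>Arr C. cmp C f (idt C (cdom C f)) = f \<and> cmp C (idt C (ccod C f)) f = f) \<and>
     (\<forall>f\<in>Arr C. \<forall>g\<in>Arr C. \<forall>h\<in>Arr C. ccod C f = cdom C g \<longrightarrow> ccod C g = cdom C h \<longrightarrow>
         cmp C h (cmp C g f) = cmp C (cmp C h g) f)"

definition strict_monoidal :: "('o,'a) mcat \<Rightarrow> bool" where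
  "strict_monoidal C \<longleftrightarrow> category C \<and> unt C \<in> Obj C \<and>
     (\<forall>a\<in>Obj C. \<forall>b\<in>Obj C. tob C a b \<in> Obj C) \<and>
     (\<forall>f\<in>Arr C. \<forall>g\<in>Arr C.
         tar C f g \<in> hom C (tob C (cdom C f) (cdom C g)) (tob C (ccod C f) (ccod C g))) \<and>
     (\<forall>a\<in>Obj C. \<forall>b\<in>Obj C. tar C (idt C a) (idt C b) = idt C (tob C a b)) \<and>
     (\<forall>f\<in>Arr C. \<forall>g\<in>Arr C. \<forall>f'\<in>Arr C. \<forall>g'\<in>Arr C.
         ccod C f = cdom C g \<longrightarrow> ccod C f' = cdom C g' \<longrightarrow>
         tar C (cmp C g f) (cmp C g' f') = cmp C (tar C g g') (tar C f f')) \<and>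
     (\<forall>a\<in>Obj C. \<forall>b\<in>Obj C. \<forall>c\<in>Obj C. tob C (tob C a b) c = tob C a (tob C b c)) \<and>
     (\<forall>f\<in>Arr C. \<forall>g\<in>Arr C. \<forall>h\<in>Arr C. tar C (tar C f g) h = tar C f (tar C g h)) \<and>
     (\<forall>a\<in>Obj C. tob C (unt C) a = a \<and> tob C a (unt C) = a) \<and>
     (\<forall>f\<in>Arr C. tar C (idt C (unt C)) f = f \<and> tar C f (idt C (unt C)) = f)"

definition epi :: "('o,'a) mcat \<Rightarrow> 'a \<Rightarrow> bool" where
  "epi C e \<longleftrightarrow> e \<in> Arr C \<and>
     (\<forall>g\<in>Arr C. \<forall>h\<in>Arr C. cdom C g = ccod C e \<longrightarrow> cdom C h = ccod C e \<longrightarrow>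
        ccod C g = ccod C h \<longrightarrow> cmp C g e = cmp C h e \<longrightarrow> g = h)"

definition iso :: "('o,'a) mcat \<Rightarrow> 'a \<Rightarrow> bool" where
  "iso C f \<longleftrightarrow> f \<in> Arr C \<and>
     (\<exists>g\<in>hom C (ccod C f) (cdom C f).
        cmp C g f = idt C (cdom C f) \<and> cmp C f g = idt C (ccod C f))"

definition is_pushout :: "('o,'a) mcat \<Rightarrow> 'a \<Rightarrow> 'a \<Rightarrow> 'o \<Rightarrow> 'a \<Rightarrow> 'a \<Rightarrow> bool" where
  "is_pushout C f g P i j \<longleftrightarrow>
     f \<in> Arr C \<and> g \<in> Arr C \<and> cdom C f = cdom C g \<and>
     i \<in> hom C (ccod C f) P \<and> j \<in> hom C (ccod C g) P \<and>
     cmp C i f = cmp C j g \<and>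
     (\<forall>Q u v. u \<in> hom C (ccod C f) Q \<longrightarrow> v \<in> hom C (ccod C g) Q \<longrightarrow>
        cmp C u f = cmp C v g \<longrightarrow>
        (\<exists>!w. w \<in> hom C P Q \<and> cmp C w i = u \<and> cmp C w j = v))"

definition has_pushouts :: "('o,'a) mcat \<Rightarrow> bool" where
  "has_pushouts C \<longleftrightarrow>
     (\<forall>f\<in>Arr C. \<forall>g\<in>Arr C. cdom C f = cdom C g \<longrightarrow> (\<exists>P i j. is_pushout C f g P i j))"

definition coalgebra :: "('o,'a) mcat \<Rightarrow> 'o \<Rightarrow> 'a \<Rightarrow> 'a \<Rightarrow> bool" where
  "coalgebra C H D e \<longleftrightarrow> H \<in> Obj C \<and>
     D \<in> hom C H (tob C H H) \<and> e \<in> hom C H (unt C) \<and>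
     cmp C (tar C D (idt C H)) D = cmp C (tar C (idt C H) D) D \<and>
     cmp C (tar C e (idt C H)) D = idt C H \<and>
     cmp C (tar C (idt C H) e) D = idt C H"

definition comodule :: "('o,'a) mcat \<Rightarrow> 'o \<Rightarrow> 'a \<Rightarrow> 'a \<Rightarrow> 'o \<Rightarrow> 'a \<Rightarrow> bool" where
  "comodule C H D e Y dl \<longleftrightarrow> Y \<in> Obj C \<and> dl \<in> hom C Y (tob C Y H) \<and>
     cmp C (tar C dl (idt C H)) dl = cmp C (tar C (idt C Y) D) dl \<and>
     cmp C (tar C (idt C Y) e) dl = idt C Y"

definition comodule_mor :: "('o,'a) mcat \<Rightarrow> 'o \<Rightarrow> 'o \<Rightarrow> 'a \<Rightarrow> 'o \<Rightarrow> 'a \<Rightarrow> 'a \<Rightarrow> bool" where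
  "comodule_mor C H Y dl Y' dl' F \<longleftrightarrow> F \<in> hom C Y Y' \<and>
     cmp C dl' F = cmp C (tar C F (idt C H)) dl"

definition pcom_datum :: "('o,'a) mcat \<Rightarrow> 'o \<Rightarrow> 'o \<Rightarrow> 'o \<Rightarrow> 'a \<Rightarrow> 'a \<Rightarrow> bool" where
  "pcom_datum C H X XH pi rho \<longleftrightarrow> X \<in> Obj C \<and> XH \<in> Obj C \<and>
     rho \<in> hom C X XH \<and> pi \<in> hom C (tob C X H) XH \<and> epi C pi"

text \<open>Geometric partial comodule, conditions (GP1) and (GP2). The pushouts
(X\<bullet>H)\<bullet>H, X\<bullet>(H\<otimes>H), X\<bullet>(H\<bullet>H) are given as some choice of pushout
(they exist since C has pushouts; GP2 does not depend on the choice).\<close>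

definition geom_pcom :: "('o,'a) mcat \<Rightarrow> 'o \<Rightarrow> 'a \<Rightarrow> 'a \<Rightarrow> 'o \<Rightarrow> 'o \<Rightarrow> 'a \<Rightarrow> 'a \<Rightarrow> bool" where
  "geom_pcom C H D e X XH pi rho \<longleftrightarrow> pcom_datum C H X XH pi rho \<and>
     (\<exists>Xe \<in> hom C XH X. cmp C Xe rho = idt C X \<and> cmp C Xe pi = tar C (idt C X) e) \<and>
     (\<exists>XHH rhoH piXH XHxH XD piXD XHbH pi' pi'XD theta.
        is_pushout C pi (tar C rho (idt C H)) XHH rhoH piXH \<and>
        is_pushout C pi (tar C (idt C X) D) XHxH XD piXD \<and>
        is_pushout C piXD (tar C pi (idt C H)) XHbH pi' pi'XD \<and>
        theta \<in> hom C XHbH XHH \<and> iso C theta \<and>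
        cmp C theta pi'XD = piXH \<and>
        cmp C rhoH rho = cmp C theta (cmp C pi' (cmp C XD rho)))"

definition pcom_mor :: "('o,'a) mcat \<Rightarrow> 'o \<Rightarrow> 'o \<Rightarrow> 'o \<Rightarrow> 'a \<Rightarrow> 'a \<Rightarrow>
    'o \<Rightarrow> 'o \<Rightarrow> 'a \<Rightarrow> 'a \<Rightarrow> 'a \<Rightarrow> 'a \<Rightarrow> bool" where
  "pcom_mor C H X XH pi rho X' XH' pi' rho' f fH \<longleftrightarrow>
     f \<in> hom C X X' \<and> fH \<in> hom C XH XH' \<and>
     cmp C rho' f = cmp C fH rho \<and>
     cmp C pi' (tar C f (idt C H)) = cmp C fH pi"

definition cov_obj :: "('o,'a) mcat \<Rightarrow> 'o \<Rightarrow> 'a \<Rightarrow> 'a \<Rightarrow> 'o \<Rightarrow> 'a \<Rightarrow> 'o \<Rightarrow> 'a \<Rightarrow> bool" where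
  "cov_obj C H D e Y dl X p \<longleftrightarrow> comodule C H D e Y dl \<and> X \<in> Obj C \<and>
     p \<in> hom C Y X \<and> epi C p"

definition cov_mor :: "('o,'a) mcat \<Rightarrow> 'o \<Rightarrow> 'o \<Rightarrow> 'a \<Rightarrow> 'o \<Rightarrow> 'a \<Rightarrow>
    'o \<Rightarrow> 'a \<Rightarrow> 'o \<Rightarrow> 'a \<Rightarrow> 'a \<Rightarrow> 'a \<Rightarrow> bool" where
  "cov_mor C H Y dl X p Y' dl' X' p' F f \<longleftrightarrow>
     comodule_mor C H Y dl Y' dl' F \<and> f \<in> hom C X X' \<and> cmp C p' F = cmp C f p"

definition induced :: "('o,'a) mcat \<Rightarrow> 'o \<Rightarrow> 'a \<Rightarrow> 'a \<Rightarrow> 'o \<Rightarrow> 'a \<Rightarrow> 'a \<Rightarrow> bool" where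
  "induced C H dl p XH rho pi \<longleftrightarrow>
     is_pushout C p (cmp C (tar C p (idt C H)) dl) XH rho pi"

definition ind_mor :: "('o,'a) mcat \<Rightarrow> 'o \<Rightarrow> 'o \<Rightarrow> 'o \<Rightarrow> 'a \<Rightarrow> 'a \<Rightarrow>
    'o \<Rightarrow> 'o \<Rightarrow> 'a \<Rightarrow> 'a \<Rightarrow> 'a \<Rightarrow> 'a" where
  "ind_mor C H X XH pi rho X' XH' pi' rho' f =
     (THE fH. pcom_mor C H X XH pi rho X' XH' pi' rho' f fH)"

end

theory Submission
  imports Defs
begin


locale smc = fixes C :: "('o,'a) mcat" assumes sm: "strict_monoidal C"
begin

lemma cat: "category C" using sm unfolding strict_monoidal_def by blast

lemma arr_obj[simp]: "f \<in> Arr C \<Longrightarrow> cdom C f \<in> Obj C" "f \<in> Arr C \<Longrightarrow> ccod C f \<in> Obj C"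
  using cat unfolding category_def by blast+

lemma idt[simp]: "a \<in> Obj C \<Longrightarrow> idt C a \<in> Arr C" "a \<in> Obj C \<Longrightarrow> cdom C (idt C a) = a"
  "a \<in> Obj C \<Longrightarrow> ccod C (idt C a) = a"
  using cat unfolding category_def hom_def by blast+

lemma cmp_arr[simp]:
  assumes "f \<in> Arr C" "g \<in> Arr C" "ccod C f = cdom C g"
  shows "cmp C g f \<in> Arr C" "cdom C (cmp C g f) = cdom C f" "ccod C (cmp C g f) = ccod C g"
  using cat assms unfolding category_def hom_def by blast+

lemma id_r[simp]: "f \<in> Arr C \<Longrightarrow> cdom C f = a \<Longrightarrow> cmp C f (idt C a) = f"
  using cat unfolding category_def by blast
lemma id_l[simp]: "f \<in> Arr C \<Longrightarrow> ccod C f = a \<Longrightarrow> cmp C (idt C a) f = f"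
  using cat unfolding category_def by blast

lemma assoc[simp]:
  assumes "f \<in> Arr C" "g \<in> Arr C" "h \<in> Arr C" "ccod C f = cdom C g" "ccod C g = cdom C h"
  shows "cmp C (cmp C h g) f = cmp C h (cmp C g f)"
  using cat assms unfolding category_def by metis

lemma unt[simp]: "unt C \<in> Obj C" using sm unfolding strict_monoidal_def by blast
lemma tob_obj[simp]: "a \<in> Obj C \<Longrightarrow> b \<in> Obj C \<Longrightarrow> tob C a b \<in> Obj C"
  using sm unfolding strict_monoidal_def by blast

lemma tar_arr[simp]:
  assumes "f \<in> Arr C" "g \<in> Arr C"
  shows "tar C f g \<in> Arr C" "cdom C (tar C f g) = tob C (cdom C f) (cdom C g)"
    "ccod C (tar C f g) = tob C (ccod C f) (ccod C g)"
  using sm assms unfolding strict_monoidal_def hom_def by blast+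

lemma tar_id[simp]: "a \<in> Obj C \<Longrightarrow> b \<in> Obj C \<Longrightarrow> tar C (idt C a) (idt C b) = idt C (tob C a b)"
  using sm unfolding strict_monoidal_def by blast

lemma interchange:
  assumes "f \<in> Arr C" "g \<in> Arr C" "f' \<in> Arr C" "g' \<in> Arr C" "ccod C f = cdom C g" "ccod C f' = cdom C g'"
  shows "tar C (cmp C g f) (cmp C g' f') = cmp C (tar C g g') (tar C f f')"
  using sm assms unfolding strict_monoidal_def by blast

lemma tob_assoc[simp]: "a \<in> Obj C \<Longrightarrow> b \<in> Obj C \<Longrightarrow> c \<in> Obj C \<Longrightarrow> tob C (tob C a b) c = tob C a (tob C b c)"
  using sm unfolding strict_monoidal_def by blast
lemma tar_assoc[simp]: "f \<in> Arr C \<Longrightarrow> g \<in> Arr C \<Longrightarrow> h \<in> Arr C \<Longrightarrow> tar C (tar C f g) h = tar C f (tar C g h)"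
  using sm unfolding strict_monoidal_def by blast
lemma tob_unt[simp]: "a \<in> Obj C \<Longrightarrow> tob C (unt C) a = a" "a \<in> Obj C \<Longrightarrow> tob C a (unt C) = a"
  using sm unfolding strict_monoidal_def by blast+
lemma tar_unt[simp]: "f \<in> Arr C \<Longrightarrow> tar C (idt C (unt C)) f = f" "f \<in> Arr C \<Longrightarrow> tar C f (idt C (unt C)) = f"
  using sm unfolding strict_monoidal_def by blast+

lemma tH_comp:
  assumes "f \<in> Arr C" "g \<in> Arr C" "ccod C f = cdom C g" "H \<in> Obj C"
  shows "tar C (cmp C g f) (idt C H) = cmp C (tar C g (idt C H)) (tar C f (idt C H))"
  using interchange[of f g "idt C H" "idt C H"] assms by simp

lemma po_unique:
  assumes po: "is_pushout C f g P i j" and w: "w1 \<in> hom C P Q" "w2 \<in> hom C P Q"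
    and eqs: "cmp C w1 i = cmp C w2 i" "cmp C w1 j = cmp C w2 j"
  shows "w1 = w2"
proof -
  have A: "f \<in> Arr C" "g \<in> Arr C" "cdom C f = cdom C g" "i \<in> hom C (ccod C f) P" "j \<in> hom C (ccod C g) P"
    "cmp C i f = cmp C j g"
    and U: "\<And>Q u v. u \<in> hom C (ccod C f) Q \<Longrightarrow> v \<in> hom C (ccod C g) Q \<Longrightarrow>
        cmp C u f = cmp C v g \<Longrightarrow> (\<exists>!w. w \<in> hom C P Q \<and> cmp C w i = u \<and> cmp C w j = v)"
    using po unfolding is_pushout_def by blast+
  have h1: "cmp C w1 i \<in> hom C (ccod C f) Q" "cmp C w1 j \<in> hom C (ccod C g) Q"
    using A w unfolding hom_def by auto
  have "cmp C (cmp C w1 i) f = cmp C w1 (cmp C i f)" using A w unfolding hom_def by auto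
  also have "\<dots> = cmp C w1 (cmp C j g)" using A by simp
  also have "\<dots> = cmp C (cmp C w1 j) g" using A w unfolding hom_def by auto
  finally have h2: "cmp C (cmp C w1 i) f = cmp C (cmp C w1 j) g" .
  from U[OF h1 h2] w eqs show ?thesis by metis
qed

lemma po_exists:
  assumes po: "is_pushout C f g P i j" and u: "u \<in> hom C (ccod C f) Q" and v: "v \<in> hom C (ccod C g) Q"
    and eq: "cmp C u f = cmp C v g"
  obtains w where "w \<in> hom C P Q" "cmp C w i = u" "cmp C w j = v"
  using po u v eq unfolding is_pushout_def by metis

lemma po_epi:
  assumes po: "is_pushout C f g P i j" and ep: "epi C f"
  shows "epi C j"
proof -
  have A: "f \<in> Arr C" "g \<in> Arr C" "cdom C f = cdom C g" "i \<in> hom C (ccod C f) P" "j \<in> hom C (ccod C g) P"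
    "cmp C i f = cmp C j g"
    using po unfolding is_pushout_def by blast+
  show ?thesis unfolding epi_def
  proof (intro conjI ballI impI)
    show "j \<in> Arr C" using A unfolding hom_def by blast
    fix a b assume ab: "a \<in> Arr C" "b \<in> Arr C" "cdom C a = ccod C j" "cdom C b = ccod C j"
      "ccod C a = ccod C b" "cmp C a j = cmp C b j"
    have "cmp C (cmp C a i) f = cmp C a (cmp C i f)" using A ab unfolding hom_def by auto
    also have "\<dots> = cmp C a (cmp C j g)" using A by simp
    also have "\<dots> = cmp C (cmp C a j) g" using A ab(1-5) unfolding hom_def by auto
    also have "\<dots> = cmp C (cmp C b j) g" using ab by simp
    also have "\<dots> = cmp C b (cmp C j g)" using A ab(1-5) unfolding hom_def by auto
    also have "\<dots> = cmp C b (cmp C i f)" using A by simp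
    also have "\<dots> = cmp C (cmp C b i) f" using A ab unfolding hom_def by auto
    finally have fe: "cmp C (cmp C a i) f = cmp C (cmp C b i) f" .
    have er: "\<And>g h. g \<in> Arr C \<Longrightarrow> h \<in> Arr C \<Longrightarrow> cdom C g = ccod C f \<Longrightarrow> cdom C h = ccod C f \<Longrightarrow>
        ccod C g = ccod C h \<Longrightarrow> cmp C g f = cmp C h f \<Longrightarrow> g = h" using ep unfolding epi_def by blast
    have "cmp C a i = cmp C b i"
      apply (rule er[OF _ _ _ _ _ fe]) using A ab(1-5) unfolding hom_def by auto
    then show "a = b" using po_unique[OF po, of a "ccod C a" b] A ab unfolding hom_def by auto
  qed
qed

lemma hom_iff: "f \<in> hom C a b \<longleftrightarrow> f \<in> Arr C \<and> cdom C f = a \<and> ccod C f = b"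
  unfolding hom_def by blast

lemma ext_eq:
  assumes "cmp C g f = cmp C g' f'" "f \<in> Arr C" "g \<in> Arr C" "f' \<in> Arr C" "g' \<in> Arr C"
    "ccod C f = cdom C g" "ccod C f' = cdom C g'" "x \<in> Arr C" "ccod C x = cdom C f"
  shows "cmp C g (cmp C f x) = cmp C g' (cmp C f' x)"
proof -
  have "cdom C f = cdom C f'" using assms(1) assms(2-7) cmp_arr(2) by metis
  then have "cmp C g' (cmp C f' x) = cmp C (cmp C g' f') x" using assms by simp
  also have "\<dots> = cmp C (cmp C g f) x" using assms(1) by simp
  also have "\<dots> = cmp C g (cmp C f x)" using assms(2-9) by simp
  finally have "cmp C g' (cmp C f' x) = cmp C g (cmp C f x)" .
  then show ?thesis by (rule sym)
qed

lemma po_facts: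
  assumes "is_pushout C f g P i j"
  shows "i \<in> Arr C" "cdom C i = ccod C f" "ccod C i = P" "j \<in> Arr C" "cdom C j = ccod C g" "ccod C j = P"
    "cmp C i f = cmp C j g"
  using assms unfolding is_pushout_def hom_def by auto

lemma extR:
  assumes "cmp C g f = h" "f \<in> Arr C" "g \<in> Arr C" "ccod C f = cdom C g" "x \<in> Arr C" "ccod C x = cdom C f"
  shows "cmp C g (cmp C f x) = cmp C h x"
  using assms by (simp flip: assms(1))

end

locale ind = smc +
  fixes H D e Y dl X p XH rho pi
  assumes coal: "coalgebra C H D e" and cov: "cov_obj C H D e Y dl X p"
    and indu: "induced C H dl p XH rho pi"
begin

lemma po: "is_pushout C p (cmp C (tar C p (idt C H)) dl) XH rho pi"
  using indu unfolding induced_def .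

lemma ty0: "H \<in> Obj C" "D \<in> Arr C" "cdom C D = H" "ccod C D = tob C H H"
  "e \<in> Arr C" "cdom C e = H" "ccod C e = unt C"
  "Y \<in> Obj C" "dl \<in> Arr C" "cdom C dl = Y" "ccod C dl = tob C Y H"
  "X \<in> Obj C" "p \<in> Arr C" "cdom C p = Y" "ccod C p = X"
  using coal cov unfolding coalgebra_def cov_obj_def comodule_def hom_def by blast+

declare ty0[simp]

lemma ty1[simp]: "rho \<in> Arr C" "cdom C rho = X" "ccod C rho = XH"
  "pi \<in> Arr C" "cdom C pi = tob C X H" "ccod C pi = XH"
  using po unfolding is_pushout_def hom_def by auto

lemma XH_obj[simp]: "XH \<in> Obj C" using arr_obj(2)[of rho] by simp

lemma rp: "cmp C rho p = cmp C pi (cmp C (tar C p (idt C H)) dl)"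
  using po unfolding is_pushout_def by simp

lemma rpx: "x \<in> Arr C \<Longrightarrow> ccod C x = Z \<Longrightarrow> Z = cdom C p \<Longrightarrow>
   cmp C rho (cmp C p x) = cmp C pi (cmp C (tar C p (idt C H)) (cmp C dl x))"
  using ext_eq[OF rp, of x] by simp

lemma coass: "cmp C (tar C dl (idt C H)) dl = cmp C (tar C (idt C Y) D) dl"
  and coun: "cmp C (tar C (idt C Y) e) dl = idt C Y"
  using cov unfolding cov_obj_def comodule_def by blast+

lemma pi_epi: "epi C pi"
  using po_epi[OF po] cov unfolding cov_obj_def by blast

lemma K: "cmp C (tar C pi (idt C H)) (cmp C (tar C (idt C X) D) (cmp C (tar C p (idt C H)) dl))
  = cmp C (tar C rho (idt C H)) (cmp C (tar C p (idt C H)) dl)"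
proof -
  have s1: "cmp C (tar C (idt C X) D) (tar C p (idt C H)) = cmp C (tar C p (idt C (tob C H H))) (tar C (idt C Y) D)"
  proof -
    have "cmp C (tar C (idt C X) D) (tar C p (idt C H)) = tar C (cmp C (idt C X) p) (cmp C D (idt C H))"
      by (rule interchange[symmetric]) simp_all
    also have "\<dots> = tar C (cmp C p (idt C Y)) (cmp C (idt C (tob C H H)) D)" by simp
    also have "\<dots> = cmp C (tar C p (idt C (tob C H H))) (tar C (idt C Y) D)"
      by (rule interchange) simp_all
    finally show ?thesis .
  qed
  have s3: "cmp C (tar C p (idt C (tob C H H))) (tar C dl (idt C H)) = tar C (cmp C (tar C p (idt C H)) dl) (idt C H)"
    using tH_comp[of dl "tar C p (idt C H)" H] by simp
  have s4: "tar C (cmp C pi (cmp C (tar C p (idt C H)) dl)) (idt C H)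
     = cmp C (tar C pi (idt C H)) (tar C (cmp C (tar C p (idt C H)) dl) (idt C H))"
    by (rule tH_comp) simp_all
  have s5: "tar C (cmp C rho p) (idt C H) = cmp C (tar C rho (idt C H)) (tar C p (idt C H))"
    by (rule tH_comp) simp_all
  have "cmp C (tar C pi (idt C H)) (cmp C (tar C (idt C X) D) (cmp C (tar C p (idt C H)) dl))
     = cmp C (tar C pi (idt C H)) (cmp C (tar C p (idt C (tob C H H))) (cmp C (tar C (idt C Y) D) dl))"
    using ext_eq[OF s1, of dl] by simp
  also have "\<dots> = cmp C (tar C pi (idt C H)) (cmp C (tar C p (idt C (tob C H H))) (cmp C (tar C dl (idt C H)) dl))"
    using coass by simp
  also have "\<dots> = cmp C (tar C pi (idt C H)) (cmp C (tar C (cmp C (tar C p (idt C H)) dl) (idt C H)) dl)"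
    by (simp flip: s3)
  also have "\<dots> = cmp C (tar C (cmp C pi (cmp C (tar C p (idt C H)) dl)) (idt C H)) dl"
    using s4 by simp
  also have "\<dots> = cmp C (tar C (cmp C rho p) (idt C H)) dl" using rp by simp
  also have "\<dots> = cmp C (tar C rho (idt C H)) (cmp C (tar C p (idt C H)) dl)" using s5 by simp
  finally show ?thesis .
qed


lemma gp1: "\<exists>Xe \<in> hom C XH X. cmp C Xe rho = idt C X \<and> cmp C Xe pi = tar C (idt C X) e"
proof -
  have a: "cmp C (tar C (idt C X) e) (tar C p (idt C H)) = cmp C p (tar C (idt C Y) e)"
  proof -
    have "cmp C (tar C (idt C X) e) (tar C p (idt C H)) = tar C (cmp C (idt C X) p) (cmp C e (idt C H))"
      by (rule interchange[symmetric]) simp_all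
    also have "\<dots> = tar C (cmp C p (idt C Y)) (cmp C (idt C (unt C)) e)" by simp
    also have "\<dots> = cmp C (tar C p (idt C (unt C))) (tar C (idt C Y) e)"
      by (rule interchange) simp_all
    also have "\<dots> = cmp C p (tar C (idt C Y) e)" by simp
    finally show ?thesis .
  qed
  have "cmp C (tar C (idt C X) e) (cmp C (tar C p (idt C H)) dl) = cmp C p (cmp C (tar C (idt C Y) e) dl)"
    using ext_eq[OF a, of dl] by simp
  also have "\<dots> = cmp C (idt C X) p" using coun by simp
  finally have eq: "cmp C (idt C X) p = cmp C (tar C (idt C X) e) (cmp C (tar C p (idt C H)) dl)" by simp
  obtain w where "w \<in> hom C XH X" "cmp C w rho = idt C X" "cmp C w pi = tar C (idt C X) e"
    by (rule po_exists[OF po _ _ eq]) (simp_all add: hom_iff)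
  then show ?thesis by blast
qed

lemma XH_unique:
  assumes "w1 \<in> hom C XH Q" "w2 \<in> hom C XH Q" "cmp C w1 rho = cmp C w2 rho" "cmp C w1 pi = cmp C w2 pi"
  shows "w1 = w2"
  using po_unique[OF po assms] .


lemma gp2:
  assumes hp: "has_pushouts C"
  shows "\<exists>XHH rhoH piXH XHxH XD piXD XHbH pi' pi'XD theta.
        is_pushout C pi (tar C rho (idt C H)) XHH rhoH piXH \<and>
        is_pushout C pi (tar C (idt C X) D) XHxH XD piXD \<and>
        is_pushout C piXD (tar C pi (idt C H)) XHbH pi' pi'XD \<and>
        theta \<in> hom C XHbH XHH \<and> iso C theta \<and>
        cmp C theta pi'XD = piXH \<and>
        cmp C rhoH rho = cmp C theta (cmp C pi' (cmp C XD rho))"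
proof -
  have hp': "\<And>f g. f \<in> Arr C \<Longrightarrow> g \<in> Arr C \<Longrightarrow> cdom C f = cdom C g \<Longrightarrow> \<exists>P i j. is_pushout C f g P i j"
    using hp unfolding has_pushouts_def by blast
  obtain XHH rhoH piXH where po1: "is_pushout C pi (tar C rho (idt C H)) XHH rhoH piXH"
    using hp'[of pi "tar C rho (idt C H)"] by auto
  obtain XHxH XD piXD where po2: "is_pushout C pi (tar C (idt C X) D) XHxH XD piXD"
    using hp'[of pi "tar C (idt C X) D"] by auto
  note f1 = po_facts[OF po1] and f2 = po_facts[OF po2]
  have t1[simp]: "rhoH \<in> Arr C" "cdom C rhoH = XH" "ccod C rhoH = XHH"
     "piXH \<in> Arr C" "cdom C piXH = tob C XH H" "ccod C piXH = XHH"
    using f1 by simp_all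
  have t2[simp]: "XD \<in> Arr C" "cdom C XD = XH" "ccod C XD = XHxH"
     "piXD \<in> Arr C" "cdom C piXD = tob C X (tob C H H)" "ccod C piXD = XHxH"
    using f2 by simp_all
  obtain XHbH pi' s where po3: "is_pushout C piXD (tar C pi (idt C H)) XHbH pi' s"
    using hp'[of piXD "tar C pi (idt C H)"] by auto
  note f3 = po_facts[OF po3]
  have t3[simp]: "pi' \<in> Arr C" "cdom C pi' = XHxH" "ccod C pi' = XHbH"
     "s \<in> Arr C" "cdom C s = tob C XH H" "ccod C s = XHbH"
    using f3 by simp_all
  have XHH_obj[simp]: "XHH \<in> Obj C" using arr_obj(2)[of rhoH] by simp
  have XHbH_obj[simp]: "XHbH \<in> Obj C" using arr_obj(2)[of pi'] by simp
  note e1 = f1(7) and e2 = f2(7) and e3 = f3(7)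
  note e1x = extR[OF e1, simplified] and e2x = extR[OF e2, simplified] and e3x = extR[OF e3, simplified]
  note rpx' = extR[OF rp, simplified]
  have eqa: "cmp C (cmp C rhoH rho) p = cmp C (cmp C piXH (cmp C (tar C pi (idt C H)) (tar C (idt C X) D))) (cmp C (tar C p (idt C H)) dl)"
  proof -
    have "cmp C (cmp C rhoH rho) p = cmp C rhoH (cmp C pi (cmp C (tar C p (idt C H)) dl))"
      using rp by simp
    also have "\<dots> = cmp C piXH (cmp C (tar C rho (idt C H)) (cmp C (tar C p (idt C H)) dl))"
      using e1x by simp
    also have "\<dots> = cmp C piXH (cmp C (tar C pi (idt C H)) (cmp C (tar C (idt C X) D) (cmp C (tar C p (idt C H)) dl)))"
      using K by simp
    finally show ?thesis by simp
  qed
  obtain a1 where a1: "a1 \<in> hom C XH XHH" "cmp C a1 rho = cmp C rhoH rho"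
      "cmp C a1 pi = cmp C piXH (cmp C (tar C pi (idt C H)) (tar C (idt C X) D))"
    by (rule po_exists[where Q=XHH, OF po _ _ eqa]) (simp_all add: hom_iff)
  have ta1[simp]: "a1 \<in> Arr C" "cdom C a1 = XH" "ccod C a1 = XHH" using a1(1) by (simp_all add: hom_iff)
  have eqb: "cmp C a1 pi = cmp C (cmp C piXH (tar C pi (idt C H))) (tar C (idt C X) D)"
    using a1(3) by simp
  obtain u where u: "u \<in> hom C XHxH XHH" "cmp C u XD = a1" "cmp C u piXD = cmp C piXH (tar C pi (idt C H))"
    by (rule po_exists[where Q=XHH, OF po2 _ _ eqb]) (simp_all add: hom_iff)
  have tu[simp]: "u \<in> Arr C" "cdom C u = XHxH" "ccod C u = XHH" using u(1) by (simp_all add: hom_iff)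
  obtain th where th: "th \<in> hom C XHbH XHH" "cmp C th pi' = u" "cmp C th s = piXH"
    by (rule po_exists[where Q=XHH, OF po3 _ _ u(3)]) (simp_all add: hom_iff)
  have tth[simp]: "th \<in> Arr C" "cdom C th = XHbH" "ccod C th = XHH" using th(1) by (simp_all add: hom_iff)
  have eqd: "cmp C (cmp C pi' (cmp C XD rho)) p = cmp C (cmp C s (tar C rho (idt C H))) (cmp C (tar C p (idt C H)) dl)"
  proof -
    have "cmp C (cmp C pi' (cmp C XD rho)) p = cmp C pi' (cmp C XD (cmp C pi (cmp C (tar C p (idt C H)) dl)))"
      using rp by simp
    also have "\<dots> = cmp C pi' (cmp C piXD (cmp C (tar C (idt C X) D) (cmp C (tar C p (idt C H)) dl)))"
      using e2x by simp
    also have "\<dots> = cmp C s (cmp C (tar C pi (idt C H)) (cmp C (tar C (idt C X) D) (cmp C (tar C p (idt C H)) dl)))"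
      using e3x by simp
    also have "\<dots> = cmp C s (cmp C (tar C rho (idt C H)) (cmp C (tar C p (idt C H)) dl))"
      using K by simp
    finally show ?thesis by simp
  qed
  obtain c where c: "c \<in> hom C XH XHbH" "cmp C c rho = cmp C pi' (cmp C XD rho)" "cmp C c pi = cmp C s (tar C rho (idt C H))"
    by (rule po_exists[where Q=XHbH, OF po _ _ eqd]) (simp_all add: hom_iff)
  have tc[simp]: "c \<in> Arr C" "cdom C c = XH" "ccod C c = XHbH" using c(1) by (simp_all add: hom_iff)
  obtain ps where ps: "ps \<in> hom C XHH XHbH" "cmp C ps rhoH = c" "cmp C ps piXH = s"
    by (rule po_exists[where Q=XHbH, OF po1 _ _ c(3)]) (simp_all add: hom_iff)
  have tps[simp]: "ps \<in> Arr C" "cdom C ps = XHH" "ccod C ps = XHbH" using ps(1) by (simp_all add: hom_iff)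
  note eqs = a1(2,3) u(2,3) th(2,3) c(2,3) ps(2,3)
  note eqsx = extR[OF a1(2), simplified] extR[OF a1(3), simplified] extR[OF u(2), simplified]
     extR[OF u(3), simplified] extR[OF th(2), simplified] extR[OF th(3), simplified]
     extR[OF c(2), simplified] extR[OF c(3), simplified] extR[OF ps(2), simplified] extR[OF ps(3), simplified]
  have U1: "w1 = w2" if w: "w1 \<in> hom C XHH Q" "w2 \<in> hom C XHH Q" and h1: "cmp C w1 piXH = cmp C w2 piXH"
    and h2: "cmp C w1 (cmp C rhoH rho) = cmp C w2 (cmp C rhoH rho)" for w1 w2 Q
  proof -
    have tw[simp]: "w1 \<in> Arr C" "cdom C w1 = XHH" "ccod C w1 = Q" "w2 \<in> Arr C" "cdom C w2 = XHH" "ccod C w2 = Q"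
      using w by (simp_all add: hom_iff)
    have "cmp C w1 rhoH = cmp C w2 rhoH"
    proof (rule XH_unique[where Q=Q])
      show "cmp C (cmp C w1 rhoH) rho = cmp C (cmp C w2 rhoH) rho" using h2 by simp
      have "cmp C (cmp C w1 rhoH) pi = cmp C w1 (cmp C piXH (tar C rho (idt C H)))" using e1 by simp
      also have "\<dots> = cmp C w2 (cmp C piXH (tar C rho (idt C H)))"
        using extR[OF h1, of "tar C rho (idt C H)"] by simp
      also have "\<dots> = cmp C (cmp C w2 rhoH) pi" using e1 by simp
      finally show "cmp C (cmp C w1 rhoH) pi = cmp C (cmp C w2 rhoH) pi" .
    qed (simp_all add: hom_iff)
    then show ?thesis using po_unique[OF po1 w _ h1] by simp
  qed
  have U3: "w1 = w2" if w: "w1 \<in> hom C XHbH Q" "w2 \<in> hom C XHbH Q" and h1: "cmp C w1 s = cmp C w2 s"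
    and h2: "cmp C w1 (cmp C pi' (cmp C XD rho)) = cmp C w2 (cmp C pi' (cmp C XD rho))" for w1 w2 Q
  proof -
    have tw[simp]: "w1 \<in> Arr C" "cdom C w1 = XHbH" "ccod C w1 = Q" "w2 \<in> Arr C" "cdom C w2 = XHbH" "ccod C w2 = Q"
      using w by (simp_all add: hom_iff)
    have h1x: "cmp C w1 (cmp C s x) = cmp C w2 (cmp C s x)" if "x \<in> Arr C" "ccod C x = tob C XH H" for x
      using extR[OF h1, of x] that by simp
    have g2: "cmp C (cmp C w1 pi') piXD = cmp C (cmp C w2 pi') piXD"
    proof -
      have "cmp C (cmp C w1 pi') piXD = cmp C w1 (cmp C s (tar C pi (idt C H)))" using e3 by simp
      also have "\<dots> = cmp C w2 (cmp C s (tar C pi (idt C H)))" using h1x by simp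
      also have "\<dots> = cmp C (cmp C w2 pi') piXD" using e3 by simp
      finally show ?thesis .
    qed
    have g1: "cmp C (cmp C w1 pi') XD = cmp C (cmp C w2 pi') XD"
    proof (rule XH_unique[where Q=Q])
      show "cmp C (cmp C (cmp C w1 pi') XD) rho = cmp C (cmp C (cmp C w2 pi') XD) rho" using h2 by simp
      have "cmp C (cmp C (cmp C w1 pi') XD) pi = cmp C w1 (cmp C s (cmp C (tar C pi (idt C H)) (tar C (idt C X) D)))"
        using e2 e3x by simp
      also have "\<dots> = cmp C w2 (cmp C s (cmp C (tar C pi (idt C H)) (tar C (idt C X) D)))"
        using h1x by simp
      also have "\<dots> = cmp C (cmp C (cmp C w2 pi') XD) pi" using e2 e3x by simp
      finally show "cmp C (cmp C (cmp C w1 pi') XD) pi = cmp C (cmp C (cmp C w2 pi') XD) pi" .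
    qed (simp_all add: hom_iff)
    have "cmp C w1 pi' = cmp C w2 pi'"
      by (rule po_unique[OF po2 _ _ g1 g2, where Q=Q]) (simp_all add: hom_iff)
    then show ?thesis using po_unique[OF po3 w _ h1] by simp
  qed
  have i1: "cmp C th ps = idt C XHH"
    by (rule U1[where Q=XHH]) (simp_all add: hom_iff eqs eqsx)
  have i2: "cmp C ps th = idt C XHbH"
    by (rule U3[where Q=XHbH]) (simp_all add: hom_iff eqs eqsx)
  have "iso C th" unfolding iso_def using i1 i2 by (auto simp: hom_iff)
  moreover have "cmp C rhoH rho = cmp C th (cmp C pi' (cmp C XD rho))" by (simp add: eqs eqsx)
  ultimately show ?thesis using po1 po2 po3 th(1,3) by blast
qed


lemma geom: "has_pushouts C \<Longrightarrow> geom_pcom C H D e X XH pi rho"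
  unfolding geom_pcom_def pcom_datum_def using gp1 gp2 pi_epi by (simp add: hom_iff)

lemma ind_mor_eq:
  assumes "pcom_mor C H X XH pi rho X' XH' pi' rho' f fH"
  shows "ind_mor C H X XH pi rho X' XH' pi' rho' f = fH"
  unfolding ind_mor_def
proof (rule the_equality)
  show "pcom_mor C H X XH pi rho X' XH' pi' rho' f fH" by fact
  fix g assume g: "pcom_mor C H X XH pi rho X' XH' pi' rho' f g"
  show "g = fH"
    by (rule XH_unique[where Q=XH']) (use g assms in \<open>auto simp: pcom_mor_def\<close>)
qed

lemma mor:
  assumes B: "ind C H D e Y' dl' X' p' XH' rho' pi'"
    and cm: "cov_mor C H Y dl X p Y' dl' X' p' F f"
  shows "\<exists>!fH. fH \<in> hom C XH XH' \<and> cmp C fH rho = cmp C rho' f \<and>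
               cmp C fH pi = cmp C pi' (tar C f (idt C H))"
    "pcom_mor C H X XH pi rho X' XH' pi' rho' f (ind_mor C H X XH pi rho X' XH' pi' rho' f)"
proof -
  interpret B: ind C H D e Y' dl' X' p' XH' rho' pi' by (rule B)
  have tF[simp]: "F \<in> Arr C" "cdom C F = Y" "ccod C F = Y'" "f \<in> Arr C" "cdom C f = X" "ccod C f = X'"
    using cm unfolding cov_mor_def comodule_mor_def hom_def by auto
  have cF: "cmp C dl' F = cmp C (tar C F (idt C H)) dl" and cf: "cmp C p' F = cmp C f p"
    using cm unfolding cov_mor_def comodule_mor_def by auto
  have eq: "cmp C (cmp C rho' f) p = cmp C (cmp C pi' (tar C f (idt C H))) (cmp C (tar C p (idt C H)) dl)"
  proof -
    have "cmp C (cmp C rho' f) p = cmp C rho' (cmp C p' F)" using cf by simp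
    also have "\<dots> = cmp C pi' (cmp C (tar C p' (idt C H)) (cmp C dl' F))"
      using B.rpx[of F] by simp
    also have "\<dots> = cmp C pi' (cmp C (tar C p' (idt C H)) (cmp C (tar C F (idt C H)) dl))"
      using cF by simp
    also have "\<dots> = cmp C pi' (cmp C (tar C (cmp C p' F) (idt C H)) dl)"
      using tH_comp[of F p' H] by simp
    also have "\<dots> = cmp C pi' (cmp C (tar C (cmp C f p) (idt C H)) dl)" using cf by simp
    also have "\<dots> = cmp C pi' (cmp C (tar C f (idt C H)) (cmp C (tar C p (idt C H)) dl))"
      using tH_comp[of p f H] by simp
    finally show ?thesis by simp
  qed
  obtain fH where fH: "fH \<in> hom C XH XH'" "cmp C fH rho = cmp C rho' f" "cmp C fH pi = cmp C pi' (tar C f (idt C H))"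
    by (rule po_exists[where Q=XH', OF po _ _ eq]) (simp_all add: hom_iff)
  show "\<exists>!fH. fH \<in> hom C XH XH' \<and> cmp C fH rho = cmp C rho' f \<and>
               cmp C fH pi = cmp C pi' (tar C f (idt C H))"
  proof (rule ex1I[of _ fH])
    show "fH \<in> hom C XH XH' \<and> cmp C fH rho = cmp C rho' f \<and> cmp C fH pi = cmp C pi' (tar C f (idt C H))"
      using fH by blast
    fix g assume g: "g \<in> hom C XH XH' \<and> cmp C g rho = cmp C rho' f \<and> cmp C g pi = cmp C pi' (tar C f (idt C H))"
    show "g = fH" by (rule XH_unique[where Q=XH']) (use g fH in auto)
  qed
  have pm: "pcom_mor C H X XH pi rho X' XH' pi' rho' f fH"
    unfolding pcom_mor_def using fH by (auto simp: hom_iff)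
  show "pcom_mor C H X XH pi rho X' XH' pi' rho' f (ind_mor C H X XH pi rho X' XH' pi' rho' f)"
    using ind_mor_eq[OF pm] pm by simp
qed

lemma mor_id: "ind_mor C H X XH pi rho X XH pi rho (idt C X) = idt C XH"
  by (rule ind_mor_eq) (simp add: pcom_mor_def hom_iff)

end

lemma (in smc) mor_comp:
  assumes A: "ind C H D e Y dl X p XH rho pi" and B: "ind C H D e Y' dl' X' p' XH' rho' pi'"
    and Cc: "ind C H D e Y'' dl'' X'' p'' XH'' rho'' pi''"
    and m1: "cov_mor C H Y dl X p Y' dl' X' p' F f" and m2: "cov_mor C H Y' dl' X' p' Y'' dl'' X'' p'' G g"
  shows "ind_mor C H X XH pi rho X'' XH'' pi'' rho'' (cmp C g f) =
          cmp C (ind_mor C H X' XH' pi' rho' X'' XH'' pi'' rho'' g)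
                (ind_mor C H X XH pi rho X' XH' pi' rho' f)"
proof -
  interpret A: ind C H D e Y dl X p XH rho pi by (rule A)
  interpret B: ind C H D e Y' dl' X' p' XH' rho' pi' by (rule B)
  interpret Cc: ind C H D e Y'' dl'' X'' p'' XH'' rho'' pi'' by (rule Cc)
  define fH where "fH = ind_mor C H X XH pi rho X' XH' pi' rho' f"
  define gH where "gH = ind_mor C H X' XH' pi' rho' X'' XH'' pi'' rho'' g"
  have pf: "pcom_mor C H X XH pi rho X' XH' pi' rho' f fH" using A.mor(2)[OF B m1] fH_def by simp
  have pg: "pcom_mor C H X' XH' pi' rho' X'' XH'' pi'' rho'' g gH" using B.mor(2)[OF Cc m2] gH_def by simp
  have t[simp]: "f \<in> Arr C" "cdom C f = X" "ccod C f = X'" "fH \<in> Arr C" "cdom C fH = XH" "ccod C fH = XH'"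
    "g \<in> Arr C" "cdom C g = X'" "ccod C g = X''" "gH \<in> Arr C" "cdom C gH = XH'" "ccod C gH = XH''"
    using pf pg unfolding pcom_mor_def hom_def by auto
  have e: "cmp C rho' f = cmp C fH rho" "cmp C pi' (tar C f (idt C H)) = cmp C fH pi"
    "cmp C rho'' g = cmp C gH rho'" "cmp C pi'' (tar C g (idt C H)) = cmp C gH pi'"
    using pf pg unfolding pcom_mor_def by auto
  have "pcom_mor C H X XH pi rho X'' XH'' pi'' rho'' (cmp C g f) (cmp C gH fH)"
    unfolding pcom_mor_def
  proof (intro conjI)
    show "cmp C g f \<in> hom C X X''" "cmp C gH fH \<in> hom C XH XH''" by (simp_all add: hom_iff)
    show "cmp C rho'' (cmp C g f) = cmp C (cmp C gH fH) rho"
      using extR[OF e(3), of f] e(1) by simp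
    have "cmp C pi'' (tar C (cmp C g f) (idt C H)) = cmp C pi'' (cmp C (tar C g (idt C H)) (tar C f (idt C H)))"
      using tH_comp[of f g H] by simp
    also have "\<dots> = cmp C gH (cmp C pi' (tar C f (idt C H)))" using extR[OF e(4), of "tar C f (idt C H)"] by simp
    also have "\<dots> = cmp C (cmp C gH fH) pi" using e(2) by simp
    finally show "cmp C pi'' (tar C (cmp C g f) (idt C H)) = cmp C (cmp C gH fH) pi" .
  qed
  then show ?thesis using A.ind_mor_eq fH_def gH_def by simp
qed



theorem proposition2p8:
  fixes C :: "('o,'a) mcat" and H :: 'o and D e :: 'a
  assumes "strict_monoidal C" and "has_pushouts C" and "coalgebra C H D e"
  shows
    \<comment> \<open>objects: Ind(Y,X,p) is a geometric partial comodule\<close>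
    "(\<forall>Y dl X p XH rho pi.
        cov_obj C H D e Y dl X p \<longrightarrow> induced C H dl p XH rho pi \<longrightarrow>
        geom_pcom C H D e X XH pi rho)
   \<and> \<comment> \<open>morphisms: unique f\<bullet>H, and (f, f\<bullet>H) is a morphism in PCom^H\<close>
    (\<forall>Y dl X p XH rho pi Y' dl' X' p' XH' rho' pi' F f.
        cov_obj C H D e Y dl X p \<longrightarrow> induced C H dl p XH rho pi \<longrightarrow>
        cov_obj C H D e Y' dl' X' p' \<longrightarrow> induced C H dl' p' XH' rho' pi' \<longrightarrow>
        cov_mor C H Y dl X p Y' dl' X' p' F f \<longrightarrow>
        (\<exists>!fH. fH \<in> hom C XH XH' \<and> cmp C fH rho = cmp C rho' f \<and>
               cmp C fH pi = cmp C pi' (tar C f (idt C H)))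
        \<and> pcom_mor C H X XH pi rho X' XH' pi' rho' f
            (ind_mor C H X XH pi rho X' XH' pi' rho' f))
   \<and> \<comment> \<open>functoriality: identities\<close>
    (\<forall>Y dl X p XH rho pi.
        cov_obj C H D e Y dl X p \<longrightarrow> induced C H dl p XH rho pi \<longrightarrow>
        ind_mor C H X XH pi rho X XH pi rho (idt C X) = idt C XH)
   \<and> \<comment> \<open>functoriality: composition\<close>
    (\<forall>Y dl X p XH rho pi Y' dl' X' p' XH' rho' pi' Y'' dl'' X'' p'' XH'' rho'' pi''
        F f G g.
        cov_obj C H D e Y dl X p \<longrightarrow> induced C H dl p XH rho pi \<longrightarrow>
        cov_obj C H D e Y' dl' X' p' \<longrightarrow> induced C H dl' p' XH' rho' pi' \<longrightarrow>
        cov_obj C H D e Y'' dl'' X'' p'' \<longrightarrow> induced C H dl'' p'' XH'' rho'' pi'' \<longrightarrow>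
        cov_mor C H Y dl X p Y' dl' X' p' F f \<longrightarrow>
        cov_mor C H Y' dl' X' p' Y'' dl'' X'' p'' G g \<longrightarrow>
        ind_mor C H X XH pi rho X'' XH'' pi'' rho'' (cmp C g f) =
          cmp C (ind_mor C H X' XH' pi' rho' X'' XH'' pi'' rho'' g)
                (ind_mor C H X XH pi rho X' XH' pi' rho' f))"
  proof -
  have smC: "smc C" by (rule smc.intro) (rule assms(1))
  interpret smc C by (rule smC)
  have mk: "ind C H D e Y dl X p XH rho pi"
    if "cov_obj C H D e Y dl X p" "induced C H dl p XH rho pi" for Y dl X p XH rho pi
    by (rule ind.intro[OF smC], rule ind_axioms.intro) (use that assms in auto)
  show ?thesis
  proof (intro conjI allI impI)
    fix Y dl X p XH rho pi
    assume "cov_obj C H D e Y dl X p" "induced C H dl p XH rho pi"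
    then show "geom_pcom C H D e X XH pi rho" using ind.geom[OF mk] assms(2) by blast
  next
    fix Y dl X p XH rho pi Y' dl' X' p' XH' rho' pi' F f
    assume a: "cov_obj C H D e Y dl X p" "induced C H dl p XH rho pi"
      "cov_obj C H D e Y' dl' X' p'" "induced C H dl' p' XH' rho' pi'"
      "cov_mor C H Y dl X p Y' dl' X' p' F f"
    show "\<exists>!fH. fH \<in> hom C XH XH' \<and> cmp C fH rho = cmp C rho' f \<and>
               cmp C fH pi = cmp C pi' (tar C f (idt C H))"
      using ind.mor(1)[OF mk[OF a(1,2)] mk[OF a(3,4)] a(5)] .
    show "pcom_mor C H X XH pi rho X' XH' pi' rho' f (ind_mor C H X XH pi rho X' XH' pi' rho' f)"
      using ind.mor(2)[OF mk[OF a(1,2)] mk[OF a(3,4)] a(5)] .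
  next
    fix Y dl X p XH rho pi
    assume "cov_obj C H D e Y dl X p" "induced C H dl p XH rho pi"
    then show "ind_mor C H X XH pi rho X XH pi rho (idt C X) = idt C XH"
      using ind.mor_id[OF mk] by blast
  next
    fix Y dl X p XH rho pi Y' dl' X' p' XH' rho' pi' Y'' dl'' X'' p'' XH'' rho'' pi'' F f G g
    assume a: "cov_obj C H D e Y dl X p" "induced C H dl p XH rho pi"
      "cov_obj C H D e Y' dl' X' p'" "induced C H dl' p' XH' rho' pi'"
      "cov_obj C H D e Y'' dl'' X'' p''" "induced C H dl'' p'' XH'' rho'' pi''"
      "cov_mor C H Y dl X p Y' dl' X' p' F f" "cov_mor C H Y' dl' X' p' Y'' dl'' X'' p'' G g"
    show "ind_mor C H X XH pi rho X'' XH'' pi'' rho'' (cmp C g f) =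
          cmp C (ind_mor C H X' XH' pi' rho' X'' XH'' pi'' rho'' g)
                (ind_mor C H X XH pi rho X' XH' pi' rho' f)"
      by (rule mor_comp[OF mk[OF a(1,2)] mk[OF a(3,4)] mk[OF a(5,6)] a(7,8)])
  qed
qed

end
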